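(* Assume Assumption A. Then the family of conductance sequences $(c_N(\eta,\xi))_{N\ge1}$, $(\eta,\xi)\in\mathbb B$, where $c_N(\eta,\xi)=\mu_N(\eta)R_N(\eta,\xi)$, is ordered.
   Context: Setting: $E$ is a fixed finite set; for each $N\ge1$, $(\eta^N_t)$ is a continuous-time irreducible Markov chain on $E$ with jump rates $R_N(\eta,\xi)$ and unique invariant probability measure $\mu_N$. Ordered families: a finite family of sequences of positive reals $(a^r_N)_{N\ge1}$, $r\in\mathfrak R$, is ordered if for all $r\neq s$ the sequence $\arctan(a^r_N/a^s_N)$ converges as $N\to\infty$. Assumption A: (i) for each $\eta\neq\xi$, either $R_N(\eta,\xi)=0$ for all $N$ or $R_N(\eta,\xi)>0$ for all $N$; let $\mathbb B=\{(\eta,\xi):\eta\ne\xi,R_N(\eta,\xi)>0\}$. (ii) For every $m\ge1$ the family $\prod_{(\eta,\xi)\in\mathbb B}R_N(\eta,\xi)^{k(\eta,\xi)}$, indexed by $k:\mathbb B\to\mathbb Z_+$ with $\sum k=m$, is ordered. *)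

theory Defs
  imports "HOL-Analysis.Analysis"
begin

definition ordered_family :: "'r set \<Rightarrow> ('r \<Rightarrow> nat \<Rightarrow> real) \<Rightarrow> bool" where
  "ordered_family I a \<longleftrightarrow> finite I \<and> (\<forall>r\<in>I. \<forall>N\<ge>1. a r N > 0) \<and>
     (\<forall>r\<in>I. \<forall>s\<in>I. r \<noteq> s \<longrightarrow> convergent (\<lambda>N. arctan (a r N / a s N)))"

text \<open>Jump rates of a continuous-time Markov chain on the finite type 'a
  (off-diagonal entries nonnegative; the diagonal is irrelevant).\<close>
definition jump_rates :: "('a \<Rightarrow> 'a \<Rightarrow> real) \<Rightarrow> bool" where
  "jump_rates Q \<longleftrightarrow> (\<forall>x y. x \<noteq> y \<longrightarrow> Q x y \<ge> 0)"

definition irreducible_rates :: "('a \<Rightarrow> 'a \<Rightarrow> real) \<Rightarrow> bool" where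
  "irreducible_rates Q \<longleftrightarrow> (\<forall>x y. (x, y) \<in> {(u, v). u \<noteq> v \<and> Q u v > 0}\<^sup>*)"

definition invariant_prob :: "('a::finite \<Rightarrow> 'a \<Rightarrow> real) \<Rightarrow> ('a \<Rightarrow> real) \<Rightarrow> bool" where
  "invariant_prob Q \<mu> \<longleftrightarrow> (\<forall>x. \<mu> x \<ge> 0) \<and> (\<Sum>x\<in>UNIV. \<mu> x) = 1 \<and>
     (\<forall>y. (\<Sum>x\<in>UNIV - {y}. \<mu> x * Q x y) = \<mu> y * (\<Sum>z\<in>UNIV - {y}. Q y z))"

definition jump_set :: "(nat \<Rightarrow> 'a \<Rightarrow> 'a \<Rightarrow> real) \<Rightarrow> ('a \<times> 'a) set" where
  "jump_set R = {(x, y). x \<noteq> y \<and> (\<forall>N\<ge>1. R N x y > 0)}"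

definition assumption_A :: "(nat \<Rightarrow> 'a::finite \<Rightarrow> 'a \<Rightarrow> real) \<Rightarrow> bool" where
  "assumption_A R \<longleftrightarrow>
     (\<forall>x y. x \<noteq> y \<longrightarrow> (\<forall>N\<ge>1. R N x y = 0) \<or> (\<forall>N\<ge>1. R N x y > 0)) \<and>
     (\<forall>m\<ge>1. ordered_family
        {k :: 'a \<times> 'a \<Rightarrow> nat. (\<forall>p. p \<notin> jump_set R \<longrightarrow> k p = 0) \<and> sum k (jump_set R) = m}
        (\<lambda>k N. \<Prod>p\<in>jump_set R. R N (fst p) (snd p) ^ k p))"

end

theory Submission
  imports Defs
begin


definition Dom :: "('r \<Rightarrow> nat \<Rightarrow> real) \<Rightarrow> 'r \<Rightarrow> 'r \<Rightarrow> bool" where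
  "Dom a i j \<longleftrightarrow> (\<exists>l. (\<lambda>N. a i N / a j N) \<longlonglongrightarrow> l)"

lemma ev_ge1: "eventually (\<lambda>N::nat. N \<ge> 1) sequentially"
  by (rule eventually_ge_at_top)

lemma arctan_recip_pos: "x > 0 \<Longrightarrow> arctan (1/x) = pi/2 - arctan x"
  using arctan_inverse[of x] by (metis inverse_eq_divide)

lemma Dom_total:
  assumes ord: "ordered_family I a" and i: "i \<in> I" and j: "j \<in> I"
  shows "Dom a i j \<or> Dom a j i"
proof -
  have pos: "\<And>r N. r \<in> I \<Longrightarrow> N \<ge> 1 \<Longrightarrow> a r N > 0" using ord by (auto simp: ordered_family_def)
  show ?thesis
proof (cases "i = j")
  case True
  have "(\<lambda>N. a i N / a i N) \<longlonglongrightarrow> 1"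
  proof (rule tendsto_eventually)
    show "\<forall>\<^sub>F N in sequentially. a i N / a i N = 1"
      using ev_ge1 by eventually_elim (use pos[OF i] in \<open>simp add: less_imp_neq[symmetric]\<close>)
  qed
  then show ?thesis using True by (auto simp: Dom_def)
next
  case False
  from ord i j False obtain L where L: "(\<lambda>N. arctan (a i N / a j N)) \<longlonglongrightarrow> L"
    unfolding ordered_family_def convergent_def by blast
  have "L \<le> pi/2"
  proof (rule tendsto_upperbound[OF L])
    show "\<forall>\<^sub>F x in sequentially. arctan (a i x / a j x) \<le> pi / 2"
      by (intro always_eventually allI less_imp_le[OF arctan_ubound])
  qed simp
  show ?thesis
  proof (cases "L < pi/2")
    case True
    have "cos L \<noteq> 0"
    proof -
      have "- (pi/2) < L"
      proof -
        have "0 \<le> L"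
        proof (rule tendsto_lowerbound[OF L])
          show "\<forall>\<^sub>F x in sequentially. 0 \<le> arctan (a i x / a j x)"
            using ev_ge1
          proof eventually_elim
            case (elim N)
            have "a i N > 0" "a j N > 0" using pos i j elim by auto
            then show ?case by simp
          qed
        qed simp
        then show ?thesis using pi_gt_zero by linarith
      qed
      then have "cos L > 0" using True by (intro cos_gt_zero_pi) auto
      then show ?thesis by simp
    qed
    then have "(\<lambda>N. tan (arctan (a i N / a j N))) \<longlonglongrightarrow> tan L"
      by (intro isCont_tendsto_compose[OF isCont_tan L])
    then show ?thesis by (auto simp: Dom_def tan_arctan)
  next
    case False
    with \<open>L \<le> pi/2\<close> have L2: "L = pi/2" by simp
    have "(\<lambda>N. pi/2 - arctan (a i N / a j N)) \<longlonglongrightarrow> pi/2 - L"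
      by (intro tendsto_intros L)
    then have "(\<lambda>N. pi/2 - arctan (a i N / a j N)) \<longlonglongrightarrow> 0" using L2 by simp
    then have "(\<lambda>N. arctan (a j N / a i N)) \<longlonglongrightarrow> 0"
    proof (rule Lim_transform_eventually)
      show "\<forall>\<^sub>F N in sequentially. pi/2 - arctan (a i N / a j N) = arctan (a j N / a i N)"
        using ev_ge1
      proof eventually_elim
        case (elim N)
        have "a i N > 0" "a j N > 0" using pos i j elim by auto
        then have "arctan (1 / (a i N / a j N)) = pi/2 - arctan (a i N / a j N)"
          by (intro arctan_recip_pos) simp
        then show ?case by simp
      qed
    qed
    then have "(\<lambda>N. tan (arctan (a j N / a i N))) \<longlonglongrightarrow> tan 0"
      by (intro isCont_tendsto_compose[OF isCont_tan]) auto
    then show ?thesis by (auto simp: Dom_def tan_arctan)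
  qed
qed
qed

lemma Dom_trans:
  assumes ord: "ordered_family I a" and j: "j \<in> I"
    and ij: "Dom a i j" and jk: "Dom a j k"
  shows "Dom a i k"
proof -
  have pos: "\<And>N. N \<ge> 1 \<Longrightarrow> a j N > 0" using ord j by (auto simp: ordered_family_def)
  obtain l1 l2 where l1: "(\<lambda>N. a i N / a j N) \<longlonglongrightarrow> l1" and l2: "(\<lambda>N. a j N / a k N) \<longlonglongrightarrow> l2"
    using ij jk by (auto simp: Dom_def)
  have "(\<lambda>N. a i N / a j N * (a j N / a k N)) \<longlonglongrightarrow> l1 * l2"
    by (intro tendsto_mult l1 l2)
  then have "(\<lambda>N. a i N / a k N) \<longlonglongrightarrow> l1 * l2"
  proof (rule Lim_transform_eventually)
    show "\<forall>\<^sub>F N in sequentially. a i N / a j N * (a j N / a k N) = a i N / a k N"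
      using ev_ge1
    proof eventually_elim
      case (elim N)
      then have "a j N \<noteq> 0" using pos by (metis less_irrefl)
      then show ?case by simp
    qed
  qed
  then show ?thesis by (auto simp: Dom_def)
qed

lemma Dom_max:
  assumes ord: "ordered_family I a" and fin: "finite J" and ne: "J \<noteq> {}" and sub: "J \<subseteq> I"
  shows "\<exists>u\<in>J. \<forall>i\<in>J. Dom a i u"
  using fin ne sub
proof (induction J rule: finite_ne_induct)
  case (singleton x)
  then show ?case using Dom_total[OF ord, of x x] by auto
next
  case (insert x F)
  then obtain u where u: "u \<in> F" "\<forall>i\<in>F. Dom a i u" by auto
  have xI: "x \<in> I" and uI: "u \<in> I" using insert u by auto
  show ?case
  proof (cases "Dom a u x")
    case True
    have "Dom a i x" if "i \<in> insert x F" for i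
    proof (cases "i = x")
      case True then show ?thesis using Dom_total[OF ord xI xI] by auto
    next
      case False
      then have "i \<in> F" using that by auto
      then show ?thesis using Dom_trans[OF ord uI _ True] u by auto
    qed
    then show ?thesis by auto
  next
    case False
    then have "Dom a x u" using Dom_total[OF ord xI uI] by auto
    then show ?thesis using u by auto
  qed
qed

lemma Dom_nonneg:
  assumes ord: "ordered_family I a" and i: "i \<in> I" and u: "u \<in> I"
    and l: "(\<lambda>N. a i N / a u N) \<longlonglongrightarrow> l"
  shows "l \<ge> 0"
proof (rule tendsto_lowerbound[OF l])
  show "\<forall>\<^sub>F N in sequentially. 0 \<le> a i N / a u N"
    using ev_ge1
  proof eventually_elim
    case (elim N)
    have "a i N > 0" "a u N > 0" using ord i u elim unfolding ordered_family_def by auto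
    then show ?case by simp
  qed
qed simp

lemma Dom_self:
  assumes ord: "ordered_family I a" and u: "u \<in> I"
  shows "(\<lambda>N. a u N / a u N) \<longlonglongrightarrow> 1"
proof (rule tendsto_eventually)
  have pos: "\<And>N. N \<ge> 1 \<Longrightarrow> a u N > 0" using ord u by (auto simp: ordered_family_def)
  show "\<forall>\<^sub>F N in sequentially. a u N / a u N = 1"
    using ev_ge1
  proof eventually_elim
    case (elim N)
    then have "a u N \<noteq> 0" using pos by (metis less_irrefl)
    then show ?case by simp
  qed
qed

lemma ordered_sums:
  assumes ord: "ordered_family I a" and fS: "finite S" and fT: "finite T"
    and neS: "S \<noteq> {}" and neT: "T \<noteq> {}" and sS: "\<phi> ` S \<subseteq> I" and sT: "\<psi> ` T \<subseteq> I"
  shows "convergent (\<lambda>N. arctan ((\<Sum>s\<in>S. a (\<phi> s) N) / (\<Sum>t\<in>T. a (\<psi> t) N)))"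
proof -
  have pos: "\<And>r N. r \<in> I \<Longrightarrow> N \<ge> 1 \<Longrightarrow> a r N > 0" using ord by (auto simp: ordered_family_def)
  obtain u where uJ: "u \<in> \<phi> ` S \<union> \<psi> ` T" and uD: "\<forall>i\<in>\<phi> ` S \<union> \<psi> ` T. Dom a i u"
  proof -
    have "finite (\<phi> ` S \<union> \<psi> ` T)" using fS fT by simp
    moreover have "\<phi> ` S \<union> \<psi> ` T \<noteq> {}" using neS by simp
    moreover have "\<phi> ` S \<union> \<psi> ` T \<subseteq> I" using sS sT by simp
    ultimately show ?thesis using Dom_max[OF ord, of "\<phi> ` S \<union> \<psi> ` T"] that by blast
  qed
  have uI: "u \<in> I" using uJ sS sT by auto
  define lm where "lm i = lim (\<lambda>N. a i N / a u N)" for i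
  have lm: "(\<lambda>N. a i N / a u N) \<longlonglongrightarrow> lm i" if iJ: "i \<in> \<phi> ` S \<union> \<psi> ` T" for i
  proof -
    obtain l where "(\<lambda>N. a i N / a u N) \<longlonglongrightarrow> l" using uD iJ unfolding Dom_def by blast
    then have "convergent (\<lambda>N. a i N / a u N)" by (auto simp: convergent_def)
    then show ?thesis unfolding lm_def by (simp add: convergent_LIMSEQ_iff)
  qed
  have lm0: "lm i \<ge> 0" if "i \<in> \<phi> ` S \<union> \<psi> ` T" for i
    using Dom_nonneg[OF ord _ uI lm[OF that]] that sS sT by auto
  have lmu: "lm u = 1" using LIMSEQ_unique[OF lm[OF uJ] Dom_self[OF ord uI]] .
  define \<alpha> where "\<alpha> = (\<Sum>s\<in>S. lm (\<phi> s))"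
  define \<beta> where "\<beta> = (\<Sum>t\<in>T. lm (\<psi> t))"
  have A: "(\<lambda>N. (\<Sum>s\<in>S. a (\<phi> s) N) / a u N) \<longlonglongrightarrow> \<alpha>"
  proof -
    have "(\<lambda>N. \<Sum>s\<in>S. a (\<phi> s) N / a u N) \<longlonglongrightarrow> \<alpha>"
      unfolding \<alpha>_def by (intro tendsto_sum lm) auto
    then show ?thesis by (simp add: sum_divide_distrib)
  qed
  have B: "(\<lambda>N. (\<Sum>t\<in>T. a (\<psi> t) N) / a u N) \<longlonglongrightarrow> \<beta>"
  proof -
    have "(\<lambda>N. \<Sum>t\<in>T. a (\<psi> t) N / a u N) \<longlonglongrightarrow> \<beta>"
      unfolding \<beta>_def by (intro tendsto_sum lm) auto
    then show ?thesis by (simp add: sum_divide_distrib)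
  qed
  have a0: "\<alpha> \<ge> 0" unfolding \<alpha>_def by (intro sum_nonneg lm0) auto
  have b0: "\<beta> \<ge> 0" unfolding \<beta>_def by (intro sum_nonneg lm0) auto
  have sposS: "(\<Sum>s\<in>S. a (\<phi> s) N) > 0" if "N \<ge> 1" for N
    using neS fS by (intro sum_pos) (use pos sS that in blast)+
  have sposT: "(\<Sum>t\<in>T. a (\<psi> t) N) > 0" if "N \<ge> 1" for N
    using neT fT by (intro sum_pos) (use pos sT that in blast)+
  have upos: "a u N > 0" if "N \<ge> 1" for N using pos uI that by auto
  show ?thesis
  proof (cases "\<beta> = 0")
    case False
    have "(\<lambda>N. arctan (((\<Sum>s\<in>S. a (\<phi> s) N) / a u N) / ((\<Sum>t\<in>T. a (\<psi> t) N) / a u N))) \<longlonglongrightarrow> arctan (\<alpha> / \<beta>)"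
      by (intro tendsto_intros A B False)
    then have "(\<lambda>N. arctan ((\<Sum>s\<in>S. a (\<phi> s) N) / (\<Sum>t\<in>T. a (\<psi> t) N))) \<longlonglongrightarrow> arctan (\<alpha> / \<beta>)"
    proof (rule Lim_transform_eventually)
      show "\<forall>\<^sub>F N in sequentially. arctan (((\<Sum>s\<in>S. a (\<phi> s) N) / a u N) / ((\<Sum>t\<in>T. a (\<psi> t) N) / a u N)) = arctan ((\<Sum>s\<in>S. a (\<phi> s) N) / (\<Sum>t\<in>T. a (\<psi> t) N))"
        using ev_ge1
      proof eventually_elim
        case (elim N)
        then have "a u N \<noteq> 0" using upos by (metis less_irrefl)
        then show ?case by simp
      qed
    qed
    then show ?thesis by (auto simp: convergent_def)
  next
    case True
    have "u \<notin> \<psi> ` T"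
    proof
      assume "u \<in> \<psi> ` T"
      then obtain t where t: "t \<in> T" "\<psi> t = u" by auto
      have "lm (\<psi> t) \<le> \<beta>" unfolding \<beta>_def
        by (rule member_le_sum) (use t lm0 fT in auto)
      then show False using t lmu True by simp
    qed
    then have "u \<in> \<phi> ` S" using uJ by auto
    then obtain s where s: "s \<in> S" "\<phi> s = u" by auto
    have "lm (\<phi> s) \<le> \<alpha>" unfolding \<alpha>_def
      by (rule member_le_sum) (use s lm0 fS in auto)
    then have a1: "\<alpha> \<ge> 1" using s lmu by simp
    have "(\<lambda>N. pi/2 - arctan (((\<Sum>t\<in>T. a (\<psi> t) N) / a u N) / ((\<Sum>s\<in>S. a (\<phi> s) N) / a u N))) \<longlonglongrightarrow> pi/2 - arctan (\<beta> / \<alpha>)"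
      using a1 by (intro tendsto_intros A B) auto
    then have "(\<lambda>N. arctan ((\<Sum>s\<in>S. a (\<phi> s) N) / (\<Sum>t\<in>T. a (\<psi> t) N))) \<longlonglongrightarrow> pi/2 - arctan (\<beta> / \<alpha>)"
    proof (rule Lim_transform_eventually)
      show "\<forall>\<^sub>F N in sequentially. pi/2 - arctan (((\<Sum>t\<in>T. a (\<psi> t) N) / a u N) / ((\<Sum>s\<in>S. a (\<phi> s) N) / a u N)) = arctan ((\<Sum>s\<in>S. a (\<phi> s) N) / (\<Sum>t\<in>T. a (\<psi> t) N))"
        using ev_ge1
      proof eventually_elim
        case (elim N)
        have e: "((\<Sum>t\<in>T. a (\<psi> t) N) / a u N) / ((\<Sum>s\<in>S. a (\<phi> s) N) / a u N)
              = 1 / ((\<Sum>s\<in>S. a (\<phi> s) N) / (\<Sum>t\<in>T. a (\<psi> t) N))"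
          using upos[OF elim] sposS[OF elim] sposT[OF elim] by simp
        show ?case unfolding e
          by (subst arctan_recip_pos) (use sposS[OF elim] sposT[OF elim] in auto)
      qed
    qed
    then show ?thesis by (auto simp: convergent_def)
  qed
qed



inductive_set reach :: "('a \<Rightarrow> 'a) \<Rightarrow> 'a \<Rightarrow> 'a set" for f :: "'a \<Rightarrow> 'a" and r :: 'a where
  base: "r \<in> reach f r"
| step: "f v \<in> reach f r \<Longrightarrow> v \<in> reach f r"

definition is_tree :: "'a \<Rightarrow> ('a \<Rightarrow> 'a) \<Rightarrow> bool" where
  "is_tree r f \<longleftrightarrow> f r = r \<and> (\<forall>v. v \<in> reach f r)"

definition Gset :: "'a \<Rightarrow> ('a \<Rightarrow> 'a) set" where
  "Gset y = {g. (\<forall>v. g v \<noteq> v) \<and> (\<forall>v. v \<in> reach g y)}"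

lemma reach_fix: "v \<in> reach f r \<Longrightarrow> f v = v \<Longrightarrow> v = r"
proof (induction rule: reach.induct)
  case base then show ?case by simp
next
  case (step v) then show ?case by simp
qed

lemma reach_trans: "u \<in> reach f a \<Longrightarrow> a \<in> reach f b \<Longrightarrow> u \<in> reach f b"
  by (induction rule: reach.induct) (auto intro: reach.step)

lemma reach_upd: "u \<in> reach h r \<Longrightarrow> u \<in> reach (h(a:=b)) r \<or> u \<in> reach (h(a:=b)) a"
proof (induction rule: reach.induct)
  case base then show ?case by (auto intro: reach.base)
next
  case (step v)
  show ?case
  proof (cases "v = a")
    case True then show ?thesis by (auto intro: reach.base)
  next
    case False
    then have "(h(a:=b)) v = h v" by simp
    then show ?thesis using step.IH by (metis reach.step)
  qed
qed

lemma reach_fwd: "v \<in> reach h s \<Longrightarrow> h s = s \<Longrightarrow> h v \<in> reach h s"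
  by (induction rule: reach.induct) (auto intro: reach.base)

lemma reach_two_fix: "u \<in> reach h r \<Longrightarrow> h r = r \<Longrightarrow> u \<in> reach h s \<Longrightarrow> h s = s \<Longrightarrow> r = s"
proof (induction rule: reach.induct)
  case base then show ?case using reach_fix by metis
next
  case (step v) then show ?case using reach_fwd by metis
qed

lemma tree_no_cycle:
  assumes t: "is_tree r f" and fa: "f a = b" and b: "b \<in> reach f a" and ar: "a \<noteq> r"
  shows False
proof -
  have fwd: "f u \<in> reach f a" if "u \<in> reach f a" for u
    using that by (induction rule: reach.induct) (use fa b in auto)
  have cl: "v \<in> reach f a \<Longrightarrow> r \<in> reach f a" if "v \<in> reach f r" for v
    using that by (induction rule: reach.induct) (use fwd in auto)
  have "a \<in> reach f r" using t by (auto simp: is_tree_def)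
  then have "r \<in> reach f a" using cl by (auto intro: reach.base)
  moreover have "f r = r" using t by (auto simp: is_tree_def)
  ultimately have "r = a" using reach_fix by metis
  then show False using ar by simp
qed

lemma tree_nofix: "is_tree r f \<Longrightarrow> v \<noteq> r \<Longrightarrow> f v \<noteq> v"
  unfolding is_tree_def using reach_fix by metis

lemma bij_a: assumes "is_tree y f" "z \<noteq> y" shows "f(y:=z) \<in> Gset y"
proof -
  have "v \<in> reach (f(y:=z)) y" if "v \<in> reach f y" for v
    using that
  proof (induction rule: reach.induct)
    case base then show ?case by (rule reach.base)
  next
    case (step v)
    then show ?case by (cases "v = y") (auto intro: reach.base reach.step)
  qed
  then show ?thesis using assms tree_nofix[OF assms(1)] by (auto simp: Gset_def is_tree_def)
qed

lemma bij_b: assumes "g \<in> Gset y" shows "is_tree y (g(y:=y))"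
proof -
  have "v \<in> reach (g(y:=y)) y" if "v \<in> reach g y" for v
    using that
  proof (induction rule: reach.induct)
    case base then show ?case by (rule reach.base)
  next
    case (step v)
    then show ?case by (cases "v = y") (auto intro: reach.base reach.step)
  qed
  then show ?thesis using assms by (auto simp: Gset_def is_tree_def)
qed

lemma bij_c: assumes "is_tree x f" "x \<noteq> y" shows "f(x:=y) \<in> Gset y"
proof -
  have x: "x \<in> reach (f(x:=y)) y" by (rule reach.step) (auto intro: reach.base)
  have "v \<in> reach (f(x:=y)) y" if "v \<in> reach f x" for v
    using that
  proof (induction rule: reach.induct)
    case base then show ?case by (rule x)
  next
    case (step v)
    show ?case
    proof (cases "v = x")
      case True then show ?thesis using x by (simp add: fun_upd_def)
    next
      case False then show ?thesis using step by (auto intro: reach.step)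
    qed
  qed
  then show ?thesis using assms tree_nofix[OF assms(1)] by (auto simp: Gset_def is_tree_def)
qed

lemma bij_d_ex:
  assumes g: "g \<in> Gset y"
  shows "\<exists>x. x \<noteq> y \<and> is_tree x (g(x:=x)) \<and> g x = y"
proof -
  define h where "h = g(y:=y)"
  have ht: "is_tree y h" using bij_b[OF g] by (simp add: h_def)
  define z where "z = g y"
  have zy: "z \<noteq> y" using g by (auto simp: Gset_def z_def)
  have P: "v \<noteq> y \<longrightarrow> (\<exists>x. h x = y \<and> x \<noteq> y \<and> v \<in> reach (h(x:=x)) x)" if "v \<in> reach h y" for v
    using that
  proof (induction rule: reach.induct)
    case base then show ?case by simp
  next
    case (step v)
    show ?case
    proof
      assume vy: "v \<noteq> y"
      show "\<exists>x. h x = y \<and> x \<noteq> y \<and> v \<in> reach (h(x:=x)) x"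
      proof (cases "h v = y")
        case True then show ?thesis using vy by (auto intro: reach.base)
      next
        case False
        then obtain x where x: "h x = y" "x \<noteq> y" "h v \<in> reach (h(x:=x)) x" using step.IH by blast
        have "v \<in> reach (h(x:=x)) x"
        proof (cases "v = x")
          case True then show ?thesis by (auto intro: reach.base)
        next
          case False then show ?thesis using x(3) by (auto intro: reach.step)
        qed
        then show ?thesis using x by blast
      qed
    qed
  qed
  have "z \<in> reach h y" using ht by (auto simp: is_tree_def)
  then obtain x where x: "h x = y" "x \<noteq> y" "z \<in> reach (h(x:=x)) x" using P zy by blast
  define h' where "h' = h(x:=x)"
  define f where "f = g(x:=x)"
  have f_eq: "f = h'(y:=z)" unfolding f_def h'_def h_def z_def using x(2) by (auto simp: fun_eq_iff)
  have h'x: "h' x = x" and h'y: "h' y = y" using x(2) by (auto simp: h'_def h_def)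
  have "z \<in> reach f x"
  proof -
    have "z \<in> reach f x \<or> z \<in> reach f y" using reach_upd[OF x(3)[folded h'_def], of y z] f_eq by simp
    moreover have False if zf: "z \<in> reach f y"
    proof -
      have "f(y:=y) = h'" using f_eq h'y by (auto simp: fun_eq_iff)
      then have "z \<in> reach h' y" using reach_upd[OF zf, of y y] by simp
      then have "x = y" using reach_two_fix[OF x(3)[folded h'_def] h'x _ h'y] by simp
      then show False using x(2) by simp
    qed
    ultimately show ?thesis by blast
  qed
  have fy: "f y = z" using x(2) by (simp add: f_def z_def)
  have yx: "y \<in> reach f x" by (rule reach.step) (simp add: fy \<open>z \<in> reach f x\<close>)
  have "u \<in> reach f x" for u
  proof -
    have "u \<in> reach g y" using g by (auto simp: Gset_def)
    then have "u \<in> reach f y \<or> u \<in> reach f x" using reach_upd[of u g y x x] by (simp add: f_def)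
    then show ?thesis by (meson reach_trans yx)
  qed
  moreover have "f x = x" by (simp add: f_def)
  moreover have "g x = y" using x by (simp add: h_def)
  ultimately show ?thesis using x(2) by (auto simp: is_tree_def f_def)
qed

lemma bij_side:
  assumes t1: "is_tree x1 (g(x1:=x1))" and g2: "g x2 = y" and x21: "x2 \<noteq> x1"
  shows "y \<in> reach (g(x1:=x1, x2:=x2)) x1"
proof -
  define f1 where "f1 = g(x1:=x1)"
  have f1x2: "f1 x2 = y" using g2 x21 by (simp add: f1_def)
  have "y \<in> reach f1 x1" using t1 by (simp add: is_tree_def f1_def)
  then have "y \<in> reach (f1(x2:=x2)) x1 \<or> y \<in> reach (f1(x2:=x2)) x2" by (rule reach_upd)
  moreover have False if yk: "y \<in> reach (f1(x2:=x2)) x2"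
  proof -
    have "f1(x2:=x2, x2:=y) = f1" using f1x2 by (auto simp: fun_eq_iff)
    then have "y \<in> reach f1 x2" using reach_upd[OF yk, of x2 y] by simp
    then show False using tree_no_cycle[OF t1[folded f1_def] f1x2 _ x21] by simp
  qed
  ultimately show ?thesis by (auto simp: f1_def)
qed

lemma bij_d_uniq:
  assumes t1: "is_tree x1 (g(x1:=x1))" and t2: "is_tree x2 (g(x2:=x2))"
    and g1: "g x1 = y" and g2: "g x2 = y"
  shows "x1 = x2"
proof (rule ccontr)
  assume ne: "x1 \<noteq> x2"
  define k where "k = g(x1:=x1, x2:=x2)"
  have k2: "g(x2:=x2, x1:=x1) = k" using ne by (auto simp: k_def fun_eq_iff)
  have a: "y \<in> reach k x1" using bij_side[OF t1 g2 ne[symmetric]] by (simp add: k_def)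
  have b: "y \<in> reach k x2" using bij_side[OF t2 g1 ne] k2 by simp
  have "k x1 = x1" "k x2 = x2" using ne by (auto simp: k_def)
  then show False using reach_two_fix[OF a _ b] ne by simp
qed

definition twt :: "('a \<Rightarrow> 'a \<Rightarrow> real) \<Rightarrow> 'a::finite \<Rightarrow> ('a \<Rightarrow> 'a) \<Rightarrow> real" where
  "twt Q r f = (\<Prod>v\<in>UNIV - {r}. Q v (f v))"

definition Wt :: "('a \<Rightarrow> 'a \<Rightarrow> real) \<Rightarrow> ('a::finite \<Rightarrow> 'a) \<Rightarrow> real" where
  "Wt Q g = (\<Prod>v\<in>UNIV. Q v (g v))"

definition wtree :: "('a \<Rightarrow> 'a \<Rightarrow> real) \<Rightarrow> 'a::finite \<Rightarrow> real" where
  "wtree Q r = (\<Sum>f\<in>{f. is_tree r f}. twt Q r f)"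

lemma twt_upd: "twt Q r f * Q r z = Wt Q (f(r:=z))"
proof -
  have "Wt Q (f(r:=z)) = Q r z * (\<Prod>v\<in>UNIV - {r}. Q v ((f(r:=z)) v))"
    unfolding Wt_def by (subst prod.remove[of _ r]) auto
  also have "(\<Prod>v\<in>UNIV - {r}. Q v ((f(r:=z)) v)) = twt Q r f"
    unfolding twt_def by (rule prod.cong) auto
  finally show ?thesis by (metis mult.commute)
qed

lemma tree_balance:
  fixes Q :: "'a::finite \<Rightarrow> 'a \<Rightarrow> real"
  shows "(\<Sum>x\<in>UNIV - {y}. wtree Q x * Q x y) = wtree Q y * (\<Sum>z\<in>UNIV - {y}. Q y z)"
proof -
  have bR: "bij_betw (\<lambda>(f,z). f(y:=z)) ({f. is_tree y f} \<times> (UNIV - {y})) (Gset y)"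
  proof (rule bij_betw_byWitness[where f' = "\<lambda>g. (g(y:=y), g y)"])
    show "\<forall>a\<in>{f. is_tree y f} \<times> (UNIV - {y}). (\<lambda>g. (g(y := y), g y)) ((\<lambda>(f, z). f(y := z)) a) = a"
      by (auto simp: is_tree_def)
    show "\<forall>a'\<in>Gset y. (\<lambda>(f, z). f(y := z)) (a'(y := y), a' y) = a'" by auto
    show "(\<lambda>(f, z). f(y := z)) ` ({f. is_tree y f} \<times> (UNIV - {y})) \<subseteq> Gset y"
    proof
      fix g assume "g \<in> (\<lambda>(f, z). f(y := z)) ` ({f. is_tree y f} \<times> (UNIV - {y}))"
      then obtain f z where "is_tree y f" "z \<noteq> y" "g = f(y:=z)" by auto
      then show "g \<in> Gset y" using bij_a by simp
    qed
    show "(\<lambda>g. (g(y := y), g y)) ` Gset y \<subseteq> {f. is_tree y f} \<times> (UNIV - {y})"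
    proof (rule image_subsetI)
      fix g assume g: "g \<in> Gset y"
      have "g y \<noteq> y" using g by (simp add: Gset_def)
      then show "(g(y:=y), g y) \<in> {f. is_tree y f} \<times> (UNIV - {y})" using bij_b[OF g] by simp
    qed
  qed
  have bL: "bij_betw (\<lambda>(x,f). f(x:=y)) (SIGMA x:UNIV - {y}. {f. is_tree x f}) (Gset y)"
    unfolding bij_betw_def
  proof
    show "inj_on (\<lambda>(x, f). f(x := y)) (SIGMA x:UNIV - {y}. {f. is_tree x f})"
    proof (rule inj_onI)
      fix p1 p2 assume p1: "p1 \<in> (SIGMA x:UNIV - {y}. {f. is_tree x f})"
        and p2: "p2 \<in> (SIGMA x:UNIV - {y}. {f. is_tree x f})"
        and eqp: "(\<lambda>(x, f). f(x := y)) p1 = (\<lambda>(x, f). f(x := y)) p2"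
      obtain x1 f1 where pp1: "p1 = (x1, f1)" by (cases p1)
      obtain x2 f2 where pp2: "p2 = (x2, f2)" by (cases p2)
      have t1: "is_tree x1 f1" using p1 pp1 by simp
      have t2: "is_tree x2 f2" using p2 pp2 by simp
      have eq: "f1(x1 := y) = f2(x2 := y)" using eqp pp1 pp2 by simp
      define g where "g = f1(x1 := y)"
      have f1x: "f1 x1 = x1" using t1 by (simp add: is_tree_def)
      have f2x: "f2 x2 = x2" using t2 by (simp add: is_tree_def)
      have e1: "g(x1:=x1) = f1" unfolding g_def using f1x by (metis fun_upd_upd fun_upd_triv)
      have e2: "g(x2:=x2) = f2" unfolding g_def eq using f2x by (metis fun_upd_upd fun_upd_triv)
      have g1: "g x1 = y" unfolding g_def by simp
      have g2: "g x2 = y" unfolding g_def eq by simp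
      have "x1 = x2" by (rule bij_d_uniq[of x1 g x2 y]) (use t1 t2 e1 e2 g1 g2 in simp_all)
      then show "p1 = p2" using e1 e2 pp1 pp2 by simp
    qed
    show "(\<lambda>(x, f). f(x := y)) ` (SIGMA x:UNIV - {y}. {f. is_tree x f}) = Gset y"
    proof
      show "(\<lambda>(x, f). f(x := y)) ` (SIGMA x:UNIV - {y}. {f. is_tree x f}) \<subseteq> Gset y"
      proof
        fix g assume "g \<in> (\<lambda>(x, f). f(x := y)) ` (SIGMA x:UNIV - {y}. {f. is_tree x f})"
        then obtain x f where "is_tree x f" "x \<noteq> y" "g = f(x:=y)" by auto
        then show "g \<in> Gset y" using bij_c by simp
      qed
      show "Gset y \<subseteq> (\<lambda>(x, f). f(x := y)) ` (SIGMA x:UNIV - {y}. {f. is_tree x f})"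
      proof
        fix g assume g: "g \<in> Gset y"
        obtain x where x: "x \<noteq> y" "is_tree x (g(x:=x))" "g x = y" using bij_d_ex[OF g] by blast
        have "g = (g(x:=x))(x:=y)" using x by (auto simp: fun_eq_iff)
        then show "g \<in> (\<lambda>(x, f). f(x := y)) ` (SIGMA x:UNIV - {y}. {f. is_tree x f})"
          using x by (auto intro!: image_eqI[where x = "(x, g(x:=x))"])
      qed
    qed
  qed
  have "wtree Q y * (\<Sum>z\<in>UNIV - {y}. Q y z) = (\<Sum>f\<in>{f. is_tree y f}. \<Sum>z\<in>UNIV - {y}. twt Q y f * Q y z)"
    unfolding wtree_def by (simp add: sum_product)
  also have "\<dots> = (\<Sum>(f,z)\<in>{f. is_tree y f} \<times> (UNIV - {y}). Wt Q (f(y:=z)))"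
    by (subst sum.cartesian_product) (simp add: twt_upd)
  also have "\<dots> = (\<Sum>g\<in>Gset y. Wt Q g)"
    using sum.reindex_bij_betw[OF bR, of "Wt Q"] by (simp add: case_prod_unfold)
  also have "\<dots> = (\<Sum>(x,f)\<in>(SIGMA x:UNIV - {y}. {f. is_tree x f}). Wt Q (f(x:=y)))"
    using sum.reindex_bij_betw[OF bL, of "Wt Q"] by (simp add: case_prod_unfold)
  also have "\<dots> = (\<Sum>x\<in>UNIV - {y}. \<Sum>f\<in>{f. is_tree x f}. twt Q x f * Q x y)"
    by (subst sum.Sigma[symmetric]) (auto simp: twt_upd)
  also have "\<dots> = (\<Sum>x\<in>UNIV - {y}. wtree Q x * Q x y)"
    unfolding wtree_def by (simp add: sum_distrib_right)
  finally show ?thesis by simp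
qed



lemma tree_exists:
  fixes Q :: "'a \<Rightarrow> 'a \<Rightarrow> real"
  assumes irr: "irreducible_rates Q"
  shows "\<exists>f. is_tree r f \<and> (\<forall>v. v \<noteq> r \<longrightarrow> Q v (f v) > 0)"
proof -
  define E where "E = {(u, v). u \<noteq> v \<and> Q u v > 0}"
  have reachE: "(v, r) \<in> E\<^sup>*" for v using irr by (simp add: irreducible_rates_def E_def)
  define d where "d v = (LEAST n. (v, r) \<in> E ^^ n)" for v
  have dI: "(v, r) \<in> E ^^ d v" for v
  proof -
    obtain n where "(v, r) \<in> E ^^ n" using rtrancl_imp_relpow[OF reachE[of v]] by blast
    then show ?thesis unfolding d_def by (rule LeastI)
  qed
  have dle: "(v, r) \<in> E ^^ n \<Longrightarrow> d v \<le> n" for v n unfolding d_def by (rule Least_le)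
  define f where "f v = (if v = r then r else (SOME u. (v, u) \<in> E \<and> (u, r) \<in> E ^^ (d v - 1)))" for v
  have fprop: "(v, f v) \<in> E \<and> (f v, r) \<in> E ^^ (d v - 1)" if vr: "v \<noteq> r" for v
  proof -
    have "d v \<noteq> 0"
    proof
      assume "d v = 0"
      then have "(v, r) \<in> E ^^ 0" using dI[of v] by simp
      then show False using vr by (auto elim: relpow_0_E)
    qed
    then have "(v, r) \<in> E ^^ Suc (d v - 1)" using dI[of v] by simp
    then have "\<exists>u. (v, u) \<in> E \<and> (u, r) \<in> E ^^ (d v - 1)" by (rule relpow_Suc_D2)
    then have s: "(\<lambda>u. (v, u) \<in> E \<and> (u, r) \<in> E ^^ (d v - 1)) (SOME u. (v, u) \<in> E \<and> (u, r) \<in> E ^^ (d v - 1))"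
      by (rule someI_ex)
    show ?thesis unfolding f_def using vr s by simp
  qed
  have dlt: "d (f v) < d v" if "v \<noteq> r" for v
  proof -
    have "d (f v) \<le> d v - 1" using fprop[OF that] dle by blast
    moreover have "d v \<noteq> 0"
    proof
      assume "d v = 0"
      then have "(v, r) \<in> E ^^ 0" using dI[of v] by simp
      then show False using that by (auto elim: relpow_0_E)
    qed
    ultimately show ?thesis by simp
  qed
  have "v \<in> reach f r" for v
  proof (induction "d v" arbitrary: v rule: less_induct)
    case less
    show ?case
    proof (cases "v = r")
      case True then show ?thesis by (simp add: reach.base)
    next
      case False
      then have "f v \<in> reach f r" using less dlt by blast
      then show ?thesis by (rule reach.step)
    qed
  qed
  moreover have "f r = r" by (simp add: f_def)
  moreover have "Q v (f v) > 0" if "v \<noteq> r" for v using fprop[OF that] by (simp add: E_def)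
  ultimately show ?thesis by (auto simp: is_tree_def)
qed

lemma twt_nonneg:
  assumes "jump_rates Q" "is_tree r f"
  shows "twt Q r f \<ge> 0"
  unfolding twt_def
proof (rule prod_nonneg)
  fix v assume "v \<in> UNIV - {r}"
  then have "f v \<noteq> v" using tree_nofix[OF assms(2)] by simp
  then show "Q v (f v) \<ge> 0" using assms(1) unfolding jump_rates_def by metis
qed

lemma wtree_pos:
  fixes Q :: "'a::finite \<Rightarrow> 'a \<Rightarrow> real"
  assumes jr: "jump_rates Q" and irr: "irreducible_rates Q"
  shows "wtree Q r > 0"
proof -
  obtain f where f: "is_tree r f" "\<forall>v. v \<noteq> r \<longrightarrow> Q v (f v) > 0" using tree_exists[OF irr] by blast
  have "twt Q r f > 0" unfolding twt_def by (rule prod_pos) (use f in auto)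
  then show ?thesis unfolding wtree_def
    by (intro sum_pos2[of _ f]) (use f twt_nonneg[OF jr] in auto)
qed

lemma inv_unique:
  fixes Q :: "'a::finite \<Rightarrow> 'a \<Rightarrow> real"
  assumes jr: "jump_rates Q" and irr: "irreducible_rates Q" and inv: "invariant_prob Q \<mu>"
  shows "\<exists>t>0. \<forall>x. \<mu> x = t * wtree Q x"
proof -
  define w where "w = wtree Q"
  have wpos: "w x > 0" for x unfolding w_def by (rule wtree_pos[OF jr irr])
  define t where "t = Min (range (\<lambda>x. \<mu> x / w x))"
  obtain y0 where ty0: "t = \<mu> y0 / w y0"
  proof -
    have "t \<in> range (\<lambda>x. \<mu> x / w x)" unfolding t_def by (rule Min_in) auto
    then show ?thesis using that by blast
  qed
  define h where "h x = \<mu> x - t * w x" for x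
  have h0: "h x \<ge> 0" for x
  proof -
    have "t \<le> \<mu> x / w x" unfolding t_def by (rule Min_le) auto
    then have "t * w x \<le> \<mu> x" using wpos[of x] by (simp add: pos_le_divide_eq)
    then show ?thesis by (simp add: h_def)
  qed
  have hy0: "h y0 = 0" using ty0 wpos[of y0] by (simp add: h_def)
  have bal: "(\<Sum>x\<in>UNIV - {y}. h x * Q x y) = h y * (\<Sum>z\<in>UNIV - {y}. Q y z)" for y
  proof -
    have m: "(\<Sum>x\<in>UNIV - {y}. \<mu> x * Q x y) = \<mu> y * (\<Sum>z\<in>UNIV - {y}. Q y z)"
      using inv by (simp add: invariant_prob_def)
    have w: "(\<Sum>x\<in>UNIV - {y}. w x * Q x y) = w y * (\<Sum>z\<in>UNIV - {y}. Q y z)"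
      unfolding w_def by (rule tree_balance)
    have "(\<Sum>x\<in>UNIV - {y}. h x * Q x y) = (\<Sum>x\<in>UNIV - {y}. \<mu> x * Q x y) - t * (\<Sum>x\<in>UNIV - {y}. w x * Q x y)"
      by (simp add: h_def algebra_simps sum_subtractf sum_distrib_left)
    also have "\<dots> = h y * (\<Sum>z\<in>UNIV - {y}. Q y z)" unfolding m w by (simp add: h_def algebra_simps)
    finally show ?thesis .
  qed
  have propg: "h x = 0" if "h y = 0" "x \<noteq> y" "Q x y > 0" for x y
  proof -
    have "(\<Sum>x\<in>UNIV - {y}. h x * Q x y) = 0" using bal[of y] that(1) by simp
    moreover have "\<forall>x\<in>UNIV - {y}. h x * Q x y \<ge> 0"
    proof
      fix x assume "x \<in> UNIV - {y}"
      then have "Q x y \<ge> 0" using jr unfolding jump_rates_def by auto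
      then show "h x * Q x y \<ge> 0" using h0[of x] by simp
    qed
    ultimately have "h x * Q x y = 0" using that(2) by (subst (asm) sum_nonneg_eq_0_iff) auto
    then show ?thesis using that(3) by simp
  qed
  have hz: "h x = 0" for x
  proof -
    have "(x, y0) \<in> {(u, v). u \<noteq> v \<and> Q u v > 0}\<^sup>*" using irr by (simp add: irreducible_rates_def)
    then show ?thesis
    proof (induction rule: converse_rtrancl_induct)
      case base then show ?case by (rule hy0)
    next
      case (step a b) then show ?case using propg by blast
    qed
  qed
  have mu: "\<mu> x = t * w x" for x using hz[of x] by (simp add: h_def)
  have "t \<noteq> 0"
  proof
    assume "t = 0"
    then have "(\<Sum>x\<in>UNIV. \<mu> x) = 0" using mu by simp
    then show False using inv by (simp add: invariant_prob_def)
  qed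
  moreover have "t \<ge> 0" using ty0 wpos[of y0] inv by (simp add: invariant_prob_def)
  ultimately have "t > 0" by simp
  then show ?thesis using mu unfolding w_def by blast
qed



lemma main_thm:
  fixes R :: "nat \<Rightarrow> 'a::finite \<Rightarrow> 'a \<Rightarrow> real"
    and \<mu> :: "nat \<Rightarrow> 'a \<Rightarrow> real"
  assumes rates: "\<And>N. N \<ge> 1 \<Longrightarrow> jump_rates (R N)"
    and irred: "\<And>N. N \<ge> 1 \<Longrightarrow> irreducible_rates (R N)"
    and inv: "\<And>N. N \<ge> 1 \<Longrightarrow> invariant_prob (R N) (\<mu> N)"
    and A: "assumption_A R"
  shows "ordered_family (jump_set R) (\<lambda>p N. \<mu> N (fst p) * R N (fst p) (snd p))"
proof -
  define B where "B = jump_set R"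
  have finB: "finite B" by simp
  have Ai: "\<And>x y. x \<noteq> y \<Longrightarrow> (\<forall>N\<ge>1. R N x y = 0) \<or> (\<forall>N\<ge>1. R N x y > 0)"
    using A unfolding assumption_A_def by blast
  have Aii: "\<And>m. m \<ge> 1 \<Longrightarrow> ordered_family
        {k :: 'a \<times> 'a \<Rightarrow> nat. (\<forall>p. p \<notin> B \<longrightarrow> k p = 0) \<and> sum k B = m}
        (\<lambda>k N. \<Prod>p\<in>B. R N (fst p) (snd p) ^ k p)"
    using A unfolding assumption_A_def B_def by blast
  have Bpos: "R N x y > 0" if "(x, y) \<in> B" "N \<ge> 1" for x y N
    using that by (simp add: B_def jump_set_def)
  have Bne: "x \<noteq> y" if "(x, y) \<in> B" for x y
    using that by (simp add: B_def jump_set_def)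
  have zero: "R N x y = 0" if "x \<noteq> y" "(x, y) \<notin> B" "N \<ge> 1" for x y N
  proof -
    have "\<not> (\<forall>N\<ge>1. R N x y > 0)" using that(1,2) by (simp add: B_def jump_set_def)
    then show ?thesis using Ai[OF that(1)] that(3) by blast
  qed
  have inB: "(x, y) \<in> B" if "x \<noteq> y" "R N x y > 0" "N \<ge> 1" for x y N
    using zero[of x y N] that by force
  define TB where "TB x = {f. is_tree x f \<and> (\<forall>v. v \<noteq> x \<longrightarrow> (v, f v) \<in> B)}" for x
  have wB: "wtree (R N) x = (\<Sum>f\<in>TB x. twt (R N) x f)" if N: "N \<ge> 1" for N x
    unfolding wtree_def
  proof (rule sum.mono_neutral_right)
    show "finite {f. is_tree x f}" by simp
    show "TB x \<subseteq> {f. is_tree x f}" by (auto simp: TB_def)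
    show "\<forall>f\<in>{f. is_tree x f} - TB x. twt (R N) x f = 0"
    proof
      fix f assume f: "f \<in> {f. is_tree x f} - TB x"
      then obtain v where v: "v \<noteq> x" "(v, f v) \<notin> B" by (auto simp: TB_def)
      have "f v \<noteq> v" using f v(1) tree_nofix[of x f v] by simp
      then have "R N v (f v) = 0" using zero[of v "f v" N] v N by auto
      then show "twt (R N) x f = 0" unfolding twt_def
        by (intro prod_zero) (use v in auto)
    qed
  qed
  have TBne: "TB x \<noteq> {}" for x
  proof -
    obtain f where f: "is_tree x f" "\<forall>v. v \<noteq> x \<longrightarrow> R 1 v (f v) > 0"
      using tree_exists[OF irred[of 1]] by auto
    have "\<forall>v. v \<noteq> x \<longrightarrow> (v, f v) \<in> B"
    proof (intro allI impI)
      fix v assume vx: "v \<noteq> x"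
      then have "f v \<noteq> v" using tree_nofix[OF f(1)] by simp
      then have "v \<noteq> f v" by metis
      then show "(v, f v) \<in> B" using f vx inB[of v "f v" 1] by auto
    qed
    then show ?thesis using f by (auto simp: TB_def)
  qed
  define m where "m = CARD('a)"
  define Im where "Im = {k :: 'a \<times> 'a \<Rightarrow> nat. (\<forall>p. p \<notin> B \<longrightarrow> k p = 0) \<and> sum k B = m}"
  define mono where "mono k N = (\<Prod>p\<in>B. R N (fst p) (snd p) ^ k p)" for k N
  define kf where "kf x \<xi> f p = (if fst p \<noteq> x \<and> f (fst p) = snd p then 1 else 0) + (if p = (x, \<xi>) then 1 else (0::nat))"
    for x \<xi> :: 'a and f :: "'a \<Rightarrow> 'a" and p :: "'a \<times> 'a"
  have m1: "m \<ge> 1" unfolding m_def by (simp add: Suc_leI finite_UNIV_card_ge_0)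
  have ordI: "ordered_family Im mono" unfolding Im_def mono_def by (rule Aii[OF m1])
  have img: "{p\<in>B. fst p \<noteq> x \<and> f (fst p) = snd p} = (\<lambda>v. (v, f v)) ` (UNIV - {x})"
    if f: "f \<in> TB x" for f x
    using f by (auto simp: TB_def)
  have kfI: "kf x \<xi> f \<in> Im" if xi: "(x, \<xi>) \<in> B" and f: "f \<in> TB x" for x \<xi> f
  proof -
    have supp: "kf x \<xi> f p = 0" if "p \<notin> B" for p
    proof -
      obtain a b where p: "p = (a, b)" by (cases p)
      have "\<not> (a \<noteq> x \<and> f a = b)" using f that p by (auto simp: TB_def)
      moreover have "p \<noteq> (x, \<xi>)" using that xi by auto
      ultimately show ?thesis by (simp add: kf_def p)
    qed
    have "sum (kf x \<xi> f) B = (\<Sum>p\<in>B. (if fst p \<noteq> x \<and> f (fst p) = snd p then 1 else 0)) + (\<Sum>p\<in>B. if p = (x, \<xi>) then 1 else (0::nat))"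
      unfolding kf_def by (simp add: sum.distrib)
    also have "(\<Sum>p\<in>B. if p = (x, \<xi>) then 1 else (0::nat)) = 1"
      using xi by simp
    also have "(\<Sum>p\<in>B. (if fst p \<noteq> x \<and> f (fst p) = snd p then 1 else (0::nat))) = (\<Sum>p\<in>{p\<in>B. fst p \<noteq> x \<and> f (fst p) = snd p}. 1)"
      by (rule sum.inter_filter[symmetric]) simp
    also have "\<dots> = card {p\<in>B. fst p \<noteq> x \<and> f (fst p) = snd p}"
      by (rule card_eq_sum[symmetric])
    also have "\<dots> = card (UNIV - {x})"
      unfolding img[OF f] by (rule card_image) (auto simp: inj_on_def)
    also have "\<dots> = m - 1" by (simp add: m_def card_Diff_singleton)
    finally have "sum (kf x \<xi> f) B = m" using m1 by simp
    then show ?thesis using supp by (auto simp: Im_def)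
  qed
  have monoeq: "mono (kf x \<xi> f) N = twt (R N) x f * R N x \<xi>"
    if xi: "(x, \<xi>) \<in> B" and f: "f \<in> TB x" for x \<xi> f N
  proof -
    have "mono (kf x \<xi> f) N = (\<Prod>p\<in>B. R N (fst p) (snd p) ^ (if fst p \<noteq> x \<and> f (fst p) = snd p then 1 else 0))
        * (\<Prod>p\<in>B. R N (fst p) (snd p) ^ (if p = (x, \<xi>) then 1 else 0))"
      unfolding mono_def kf_def by (simp add: power_add prod.distrib)
    also have "(\<Prod>p\<in>B. R N (fst p) (snd p) ^ (if p = (x, \<xi>) then 1 else 0)) = R N x \<xi>"
    proof -
      have "(\<Prod>p\<in>B. R N (fst p) (snd p) ^ (if p = (x, \<xi>) then 1 else 0))
          = (\<Prod>p\<in>B. if p = (x, \<xi>) then R N (fst p) (snd p) else 1)"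
        by (rule prod.cong) auto
      also have "\<dots> = R N x \<xi>" using xi by (simp add: prod.delta)
      finally show ?thesis .
    qed
    also have "(\<Prod>p\<in>B. R N (fst p) (snd p) ^ (if fst p \<noteq> x \<and> f (fst p) = snd p then 1 else 0))
        = (\<Prod>p\<in>B. if fst p \<noteq> x \<and> f (fst p) = snd p then R N (fst p) (snd p) else 1)"
      by (rule prod.cong) auto
    also have "\<dots> = (\<Prod>p\<in>{p\<in>B. fst p \<noteq> x \<and> f (fst p) = snd p}. R N (fst p) (snd p))"
      by (rule prod.inter_filter[symmetric]) simp
    also have "\<dots> = (\<Prod>v\<in>UNIV - {x}. R N v (f v))"
      unfolding img[OF f] by (subst prod.reindex) (auto simp: inj_on_def)
    finally show ?thesis by (simp add: twt_def)
  qed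
  have tex: "\<exists>t>0. \<forall>x. \<mu> N x = t * wtree (R N) x" if "N \<ge> 1" for N
    using inv_unique[OF rates[OF that] irred[OF that] inv[OF that]] .
  define tN where "tN N = (SOME t. t > 0 \<and> (\<forall>x. \<mu> N x = t * wtree (R N) x))" for N
  have tN: "tN N > 0 \<and> (\<forall>x. \<mu> N x = tN N * wtree (R N) x)" if "N \<ge> 1" for N
    unfolding tN_def using someI_ex[OF tex[OF that]] .
  have cform: "\<mu> N x * R N x \<xi> = tN N * (\<Sum>f\<in>TB x. mono (kf x \<xi> f) N)"
    if xi: "(x, \<xi>) \<in> B" and N: "N \<ge> 1" for x \<xi> N
  proof -
    have "\<mu> N x * R N x \<xi> = tN N * ((\<Sum>f\<in>TB x. twt (R N) x f) * R N x \<xi>)"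
      using tN[OF N] wB[OF N] by simp
    also have "\<dots> = tN N * (\<Sum>f\<in>TB x. mono (kf x \<xi> f) N)"
      by (simp add: sum_distrib_right monoeq[OF xi])
    finally show ?thesis .
  qed
  have pos: "\<mu> N (fst p) * R N (fst p) (snd p) > 0" if "p \<in> B" "N \<ge> 1" for p N
  proof -
    obtain x \<xi> where p: "p = (x, \<xi>)" by (cases p)
    have "wtree (R N) x > 0" by (rule wtree_pos[OF rates irred]) (use that in auto)
    then have "\<mu> N x > 0" using tN[OF that(2)] by simp
    then show ?thesis using Bpos[of x \<xi> N] that p by simp
  qed
  have conv: "convergent (\<lambda>N. arctan (\<mu> N (fst p) * R N (fst p) (snd p) / (\<mu> N (fst q) * R N (fst q) (snd q))))"
    if p: "p \<in> B" and q: "q \<in> B" for p q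
  proof -
    obtain x \<xi> where pp: "p = (x, \<xi>)" by (cases p)
    obtain x' \<xi>' where qq: "q = (x', \<xi>')" by (cases q)
    have c: "convergent (\<lambda>N. arctan ((\<Sum>f\<in>TB x. mono (kf x \<xi> f) N) / (\<Sum>f\<in>TB x'. mono (kf x' \<xi>' f) N)))"
      by (rule ordered_sums[OF ordI]) (use TBne kfI p q pp qq in auto)
    then obtain L where L: "(\<lambda>N. arctan ((\<Sum>f\<in>TB x. mono (kf x \<xi> f) N) / (\<Sum>f\<in>TB x'. mono (kf x' \<xi>' f) N))) \<longlonglongrightarrow> L"
      by (auto simp: convergent_def)
    have "(\<lambda>N. arctan (\<mu> N (fst p) * R N (fst p) (snd p) / (\<mu> N (fst q) * R N (fst q) (snd q)))) \<longlonglongrightarrow> L"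
    proof (rule Lim_transform_eventually[OF L])
      show "\<forall>\<^sub>F N in sequentially. arctan ((\<Sum>f\<in>TB x. mono (kf x \<xi> f) N) / (\<Sum>f\<in>TB x'. mono (kf x' \<xi>' f) N))
          = arctan (\<mu> N (fst p) * R N (fst p) (snd p) / (\<mu> N (fst q) * R N (fst q) (snd q)))"
        using ev_ge1
      proof eventually_elim
        case (elim N)
        have t0: "tN N \<noteq> 0" using tN[OF elim] by simp
        show ?case using cform[of x \<xi> N] cform[of x' \<xi>' N] p q pp qq elim t0 by simp
      qed
    qed
    then show ?thesis by (auto simp: convergent_def)
  qed
  show ?thesis unfolding ordered_family_def B_def[symmetric]
    using finB pos conv by auto
qed


theorem lemma3p4:
  fixes R :: "nat \<Rightarrow> 'a::finite \<Rightarrow> 'a \<Rightarrow> real"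
    and \<mu> :: "nat \<Rightarrow> 'a \<Rightarrow> real"
  assumes rates: "\<And>N. N \<ge> 1 \<Longrightarrow> jump_rates (R N)"
    and irred: "\<And>N. N \<ge> 1 \<Longrightarrow> irreducible_rates (R N)"
    and inv: "\<And>N. N \<ge> 1 \<Longrightarrow> invariant_prob (R N) (\<mu> N)"
    and A: "assumption_A R"
  shows "ordered_family (jump_set R) (\<lambda>p N. \<mu> N (fst p) * R N (fst p) (snd p))"
  by (rule main_thm[OF rates irred inv A])

end
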